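(* Let $H$ and $J$ be finite graphs, let $S\subseteq V(H)$ and $T\subseteq V(J)$ with $|S| = |T|$, and let $f : S\to T$ be a bijection. Let $H\circ_f J$ denote the graph obtained from the disjoint union of $H$ and $J$ by identifying each vertex $x\in S$ with the vertex $f(x)\in T$ (the identified vertex being regarded as $x$), so that $V(H\circ_f J) = V(H)\cup (V(J)\setminus T)$ and $E(H\circ_f J) = E(H)\cup E(J)$ (edges of $J$ incident with $T$ being transferred to the corresponding vertices of $S$). If $S$ is a decycling set of $H$ and $T$ is a decycling set of $J$, then $S$ is a decycling set of $H\circ_f J$. Moreover, if $S$ is a minimum decycling set of $H$ and $T$ is a minimum decycling set of $J$, then $S$ is a minimum decycling set of $H\circ_f J$.
   Context: For a graph $G$, a set $S\subseteq V(G)$ is a decycling set of $G$ if $G - S$ is acyclic (a forest). The decycling number $\nabla(G)$ is the smallest size of a decycling set of $G$, and a decycling set of this size is a minimum decycling set. *)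

theory Defs
  imports Main
begin

type_synonym 'a graph = "'a set \<times> 'a set set"

definition verts :: "'a graph \<Rightarrow> 'a set" where "verts G = fst G"
definition edges :: "'a graph \<Rightarrow> 'a set set" where "edges G = snd G"

definition finite_graph :: "'a graph \<Rightarrow> bool" where
  "finite_graph G \<longleftrightarrow> finite (verts G) \<and>
     (\<forall>e\<in>edges G. \<exists>u v. e = {u, v} \<and> u \<noteq> v \<and> u \<in> verts G \<and> v \<in> verts G)"

definition is_cycle :: "'a graph \<Rightarrow> 'a list \<Rightarrow> bool" where
  "is_cycle G vs \<longleftrightarrow> length vs \<ge> 3 \<and> distinct vs \<and> set vs \<subseteq> verts G \<and>
     (\<forall>i < length vs. {vs ! i, vs ! ((i + 1) mod length vs)} \<in> edges G)"

definition acyclic_graph :: "'a graph \<Rightarrow> bool" where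
  "acyclic_graph G \<longleftrightarrow> \<not> (\<exists>vs. is_cycle G vs)"

definition delete_verts :: "'a graph \<Rightarrow> 'a set \<Rightarrow> 'a graph" where
  "delete_verts G S = (verts G - S, {e \<in> edges G. e \<inter> S = {}})"

definition decycling_set :: "'a graph \<Rightarrow> 'a set \<Rightarrow> bool" where
  "decycling_set G S \<longleftrightarrow> S \<subseteq> verts G \<and> acyclic_graph (delete_verts G S)"

definition decycling_number :: "'a graph \<Rightarrow> nat" where
  "decycling_number G = Min {card S | S. decycling_set G S}"

definition min_decycling_set :: "'a graph \<Rightarrow> 'a set \<Rightarrow> bool" where
  "min_decycling_set G S \<longleftrightarrow> decycling_set G S \<and> card S = decycling_number G"

text \<open>Gluing H and J along a bijection f : S \<rightarrow> T. Vertices of H are tagged Inl,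
  vertices of J are tagged Inr; each vertex y of T is identified with Inl (f\<inverse> y).\<close>
definition glue_map :: "('a \<Rightarrow> 'b) \<Rightarrow> 'a set \<Rightarrow> 'b set \<Rightarrow> 'b \<Rightarrow> 'a + 'b" where
  "glue_map f S T y = (if y \<in> T then Inl (the_inv_into S f y) else Inr y)"

definition glue :: "'a graph \<Rightarrow> 'b graph \<Rightarrow> 'a set \<Rightarrow> 'b set \<Rightarrow> ('a \<Rightarrow> 'b) \<Rightarrow> ('a + 'b) graph" where
  "glue H J S T f =
     (Inl ` verts H \<union> Inr ` (verts J - T),
      (\<lambda>e. Inl ` e) ` edges H \<union> (\<lambda>e. glue_map f S T ` e) ` edges J)"

end

theory Submission
  imports Defs
begin

lemma edge_cases:
  assumes "bij_betw f S T" "e' \<in> edges (delete_verts (glue H J S T f) (Inl`S))"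
  shows "(\<exists>e\<in>edges H. e \<inter> S = {} \<and> e' = Inl`e) \<or> (\<exists>e\<in>edges J. e \<inter> T = {} \<and> e' = Inr`e)"
proof -
  from assms(2) have e'G: "e' \<in> edges (glue H J S T f)" and dis: "e' \<inter> Inl`S = {}"
    by (auto simp: delete_verts_def edges_def)
  from e'G consider (h) e where "e\<in>edges H" "e' = Inl`e"
    | (j) e where "e \<in> edges J" "e' = glue_map f S T ` e"
    unfolding glue_def edges_def by auto
  then show ?thesis
  proof cases
    case h
    then have "e \<inter> S = {}" using dis by auto
    thus ?thesis using h by auto
  next
    case j
    have nt: "y \<notin> T" if "y \<in> e" for y
    proof
      assume "y \<in> T"
      then have "the_inv_into S f y \<in> S" using assms(1)
        by (metis bij_betw_def the_inv_into_into order_refl)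
      hence "glue_map f S T y \<in> Inl`S" using \<open>y\<in>T\<close> by (simp add: glue_map_def)
      thus False using dis j that by auto
    qed
    hence "e' = Inr`e" using j by (auto simp: glue_map_def)
    moreover have "e \<inter> T = {}" using nt by blast
    ultimately show ?thesis using j by blast
  qed
qed

lemma cycle_map:
  assumes "is_cycle G vs" "inj g" "g`verts G \<subseteq> verts G'" "\<forall>e\<in>edges G. g`e \<in> edges G'"
  shows "is_cycle G' (map g vs)"
proof -
  have E: "\<forall>i < length (map g vs). {map g vs ! i, map g vs ! ((i + 1) mod length (map g vs))} \<in> edges G'"
  proof (intro allI impI)
    fix i assume i0: "i < length (map g vs)"
    then have i: "i < length vs" by simp
    have m: "(i + 1) mod length vs < length vs" using i by (intro mod_less_divisor) linarith
    have "{vs ! i, vs ! ((i + 1) mod length vs)} \<in> edges G"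
      using assms(1) i unfolding is_cycle_def by blast
    hence "g ` {vs ! i, vs ! ((i + 1) mod length vs)} \<in> edges G'" using assms(4) by blast
    thus "{map g vs ! i, map g vs ! ((i + 1) mod length (map g vs))} \<in> edges G'"
      using i m by simp
  qed
  have "3 \<le> length (map g vs)" using assms(1) unfolding is_cycle_def by simp
  moreover have "distinct (map g vs)" using assms(1) inj_on_subset[OF assms(2) subset_UNIV]
    unfolding is_cycle_def by (simp add: distinct_map)
  moreover have "set (map g vs) \<subseteq> verts G'" using assms(1,3) unfolding is_cycle_def
    by auto
  ultimately show ?thesis using E unfolding is_cycle_def by blast
qed

lemma pairL: assumes "{a,b} = Inl`e" shows "isl a \<and> isl b"
proof -
  have "a \<in> Inl`e" "b \<in> Inl`e" using assms by blast+
  thus ?thesis by auto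
qed
lemma pairR: assumes "{a,b} = Inr`e" shows "\<not> isl a \<and> \<not> isl b"
proof -
  have "a \<in> Inr`e" "b \<in> Inr`e" using assms by blast+
  thus ?thesis by auto
qed

lemma part1:
  fixes H :: "'a graph" and J :: "'b graph" and f :: "'a \<Rightarrow> 'b"
  assumes bij: "bij_betw f S T" and dH: "decycling_set H S" and dJ: "decycling_set J T"
  shows "decycling_set (glue H J S T f) (Inl`S)"
proof -
  let ?G = "glue H J S T f"
  let ?G' = "delete_verts ?G (Inl`S)"
  have sub: "Inl`S \<subseteq> verts ?G" using dH by (auto simp: decycling_set_def glue_def verts_def)
  have "acyclic_graph ?G'"
    unfolding acyclic_graph_def
  proof
    assume "\<exists>vs. is_cycle ?G' vs"
    then obtain vs where c: "is_cycle ?G' vs" by blast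
    define n where "n = length vs"
    have n3: "n \<ge> 3" and dist: "distinct vs" and setv: "set vs \<subseteq> verts ?G'"
      and edg: "\<forall>i<n. {vs ! i, vs ! ((i + 1) mod n)} \<in> edges ?G'"
      using c unfolding is_cycle_def n_def by blast+
    have adj: "isl (vs!i) = isl (vs!((i+1) mod n))" if "i<n" for i
    proof -
      have "{vs ! i, vs ! ((i + 1) mod n)} \<in> edges ?G'" using edg that by blast
      from edge_cases[OF bij this] show ?thesis
        using pairL[of "vs ! i" "vs ! ((i + 1) mod n)"] pairR[of "vs ! i" "vs ! ((i + 1) mod n)"]
        by blast
    qed
    have same: "isl (vs!i) = isl (vs!0)" if "i<n" for i
      using that
    proof (induction i)
      case 0 then show ?case by simp
    next
      case (Suc i)
      then have "(i+1) mod n = Suc i" by simp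
      then show ?case using adj[of i] Suc by simp
    qed
    show False
    proof (cases "isl (vs!0)")
      case True
      define ws where "ws = map projl vs"
      have vsw: "vs = map Inl ws" unfolding ws_def
        by (rule nth_equalityI) (use same True n_def in auto)
      have "is_cycle (delete_verts H S) ws"
        unfolding is_cycle_def
      proof (intro conjI allI impI)
        show "3 \<le> length ws" using n3 n_def vsw by simp
        show "distinct ws" using dist vsw by (simp add: distinct_map)
        show "set ws \<subseteq> verts (delete_verts H S)"
          using setv vsw by (auto simp: delete_verts_def verts_def glue_def)
        fix i assume i: "i < length ws"
        have ln: "length ws = n" using vsw n_def by simp
        have m: "(i + 1) mod n < n" using i ln by (intro mod_less_divisor) linarith
        have e0: "{vs ! i, vs ! ((i + 1) mod n)} \<in> edges ?G'" using edg i ln by simp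
        have "vs ! i = Inl (ws ! i)" "vs ! ((i + 1) mod n) = Inl (ws ! ((i + 1) mod n))"
          using vsw i m ln by simp_all
        with e0 have "{Inl (ws ! i), Inl (ws ! ((i + 1) mod n))} \<in> edges ?G'" by simp
        from edge_cases[OF bij this]
        show "{ws ! i, ws ! ((i + 1) mod length ws)} \<in> edges (delete_verts H S)"
        proof
          assume "\<exists>e\<in>edges H. e \<inter> S = {} \<and> {Inl (ws ! i), Inl (ws ! ((i + 1) mod n))} = (Inl ` e :: ('a + 'b) set)"
          then show ?thesis
          proof (elim bexE conjE)
            fix e assume e: "e\<in>edges H" "e \<inter> S = {}"
              "{Inl (ws ! i), Inl (ws ! ((i + 1) mod n))} = (Inl ` e :: ('a + 'b) set)"
            have "(Inl ` {ws ! i, ws ! ((i + 1) mod n)} :: ('a + 'b) set) = (Inl ` e :: ('a + 'b) set)"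
              using e(3) by (simp only: image_insert image_empty)
            then have "{ws ! i, ws ! ((i + 1) mod n)} = e"
              by (simp only: inj_image_eq_iff[OF inj_Inl])
            then show ?thesis using e ln by (simp add: delete_verts_def edges_def)
          qed
        next
          assume "\<exists>e\<in>edges J. e \<inter> T = {} \<and> {Inl (ws ! i), Inl (ws ! ((i + 1) mod n))} = (Inr ` e :: ('a + 'b) set)"
          then show ?thesis
          proof (elim bexE conjE)
            fix e assume "{Inl (ws ! i), Inl (ws ! ((i + 1) mod n))} = (Inr ` e :: ('a + 'b) set)"
            from pairR[OF this] show ?thesis by simp
          qed
        qed
      qed
      then show False using dH unfolding decycling_set_def acyclic_graph_def by blast
    next
      case False
      define ws where "ws = map projr vs"
      have vsw: "vs = map Inr ws" unfolding ws_def
        by (rule nth_equalityI) (use same False n_def in auto)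
      have "is_cycle (delete_verts J T) ws"
        unfolding is_cycle_def
      proof (intro conjI allI impI)
        show "3 \<le> length ws" using n3 n_def vsw by simp
        show "distinct ws" using dist vsw by (simp add: distinct_map)
        show "set ws \<subseteq> verts (delete_verts J T)"
          using setv vsw by (auto simp: delete_verts_def verts_def glue_def)
        fix i assume i: "i < length ws"
        have ln: "length ws = n" using vsw n_def by simp
        have m: "(i + 1) mod n < n" using i ln by (intro mod_less_divisor) linarith
        have e0: "{vs ! i, vs ! ((i + 1) mod n)} \<in> edges ?G'" using edg i ln by simp
        have "vs ! i = Inr (ws ! i)" "vs ! ((i + 1) mod n) = Inr (ws ! ((i + 1) mod n))"
          using vsw i m ln by simp_all
        with e0 have "{Inr (ws ! i), Inr (ws ! ((i + 1) mod n))} \<in> edges ?G'" by simp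
        from edge_cases[OF bij this]
        show "{ws ! i, ws ! ((i + 1) mod length ws)} \<in> edges (delete_verts J T)"
        proof
          assume "\<exists>e\<in>edges H. e \<inter> S = {} \<and> {Inr (ws ! i), Inr (ws ! ((i + 1) mod n))} = (Inl ` e :: ('a + 'b) set)"
          then show ?thesis
          proof (elim bexE conjE)
            fix e assume "{Inr (ws ! i), Inr (ws ! ((i + 1) mod n))} = (Inl ` e :: ('a + 'b) set)"
            from pairL[OF this] show ?thesis by simp
          qed
        next
          assume "\<exists>e\<in>edges J. e \<inter> T = {} \<and> {Inr (ws ! i), Inr (ws ! ((i + 1) mod n))} = (Inr ` e :: ('a + 'b) set)"
          then show ?thesis
          proof (elim bexE conjE)
            fix e assume e: "e\<in>edges J" "e \<inter> T = {}"
              "{Inr (ws ! i), Inr (ws ! ((i + 1) mod n))} = (Inr ` e :: ('a + 'b) set)"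
            have "(Inr ` {ws ! i, ws ! ((i + 1) mod n)} :: ('a + 'b) set) = (Inr ` e :: ('a + 'b) set)"
              using e(3) by (simp only: image_insert image_empty)
            then have "{ws ! i, ws ! ((i + 1) mod n)} = e"
              by (simp only: inj_image_eq_iff[OF inj_Inr])
            then show ?thesis using e ln by (simp add: delete_verts_def edges_def)
          qed
        qed
      qed
      then show False using dJ unfolding decycling_set_def acyclic_graph_def by blast
    qed
  qed
  then show ?thesis using sub unfolding decycling_set_def by blast
qed

lemma fin_cards: "finite (verts G) \<Longrightarrow> finite {card S | S. decycling_set G S}"
  by (rule finite_subset[of _ "card ` Pow (verts G)"]) (auto simp: decycling_set_def)

lemma part2:
  fixes H :: "'a graph" and J :: "'b graph"
  assumes fH: "finite_graph H" and fJ: "finite_graph J" and bij: "bij_betw f S T"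
    and mH: "min_decycling_set H S" and dJ: "decycling_set J T"
  shows "min_decycling_set (glue H J S T f) (Inl`S)"
proof -
  let ?G = "glue H J S T f"
  have d1: "decycling_set ?G (Inl`S)" using part1[OF bij _ dJ] mH
    by (simp add: min_decycling_set_def)
  have finG: "finite (verts ?G)" using fH fJ
    by (simp add: finite_graph_def glue_def verts_def)
  have finH: "finite (verts H)" using fH by (simp add: finite_graph_def)
  have lb: "card S \<le> card D" if D: "decycling_set ?G D" for D
  proof -
    define DH where "DH = {x \<in> verts H. Inl x \<in> D}"
    have "acyclic_graph (delete_verts H DH)"
      unfolding acyclic_graph_def
    proof
      assume "\<exists>vs. is_cycle (delete_verts H DH) vs"
      then obtain vs where c: "is_cycle (delete_verts H DH) vs" by blast
      have "is_cycle (delete_verts ?G D) (map Inl vs)"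
      proof (rule cycle_map[OF c])
        show "inj Inl" by simp
        show "Inl ` verts (delete_verts H DH) \<subseteq> verts (delete_verts ?G D)"
          by (auto simp: delete_verts_def verts_def glue_def DH_def)
        show "\<forall>e\<in>edges (delete_verts H DH). Inl ` e \<in> edges (delete_verts ?G D)"
        proof
          fix e assume e: "e \<in> edges (delete_verts H DH)"
          then have eH: "e \<in> edges H" and dis: "e \<inter> DH = {}"
            by (auto simp: delete_verts_def edges_def)
          obtain u v where "e = {u, v}" "u \<in> verts H" "v \<in> verts H"
            using fH eH unfolding finite_graph_def by blast
          then have "e \<subseteq> verts H" by simp
          then have "Inl ` e \<inter> D = {}" using dis by (auto simp: DH_def)
          then show "Inl ` e \<in> edges (delete_verts ?G D)"
            using eH by (auto simp: delete_verts_def edges_def glue_def)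
        qed
      qed
      then show False using D unfolding decycling_set_def acyclic_graph_def by blast
    qed
    then have "decycling_set H DH" unfolding decycling_set_def DH_def by auto
    then have "card DH \<in> {card S |S. decycling_set H S}" by blast
    then have "decycling_number H \<le> card DH"
      unfolding decycling_number_def by (rule Min_le[OF fin_cards[OF finH]])
    moreover have "card S = decycling_number H" using mH by (simp add: min_decycling_set_def)
    moreover have "card DH \<le> card D"
    proof -
      have fD: "finite D" using D finG unfolding decycling_set_def by (auto intro: finite_subset)
      have sD: "Inl ` DH \<subseteq> D" by (auto simp: DH_def)
      show ?thesis using card_mono[OF fD sD] by (simp add: card_image)
    qed
    ultimately show ?thesis by linarith
  qed
  have "decycling_number ?G = card (Inl ` S :: ('a + 'b) set)"
    unfolding decycling_number_def
  proof (rule Min_eqI[OF fin_cards[OF finG]])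
    show "card (Inl ` S :: ('a + 'b) set) \<in> {card S |S. decycling_set ?G S}" using d1 by blast
    fix y assume "y \<in> {card S |S. decycling_set ?G S}"
    then obtain D where "y = card D" "decycling_set ?G D" by blast
    then show "card (Inl ` S :: ('a + 'b) set) \<le> y" using lb by (simp add: card_image)
  qed
  then show ?thesis using d1 by (simp add: min_decycling_set_def)
qed

theorem mainTheorem1:
  fixes H :: "'a graph" and J :: "'b graph" and S :: "'a set" and T :: "'b set"
    and f :: "'a \<Rightarrow> 'b"
  assumes "finite_graph H" and "finite_graph J"
    and "S \<subseteq> verts H" and "T \<subseteq> verts J"
    and "card S = card T"
    and "bij_betw f S T"
  shows "(decycling_set H S \<and> decycling_set J T \<longrightarrow>
            decycling_set (glue H J S T f) (Inl ` S)) \<and>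
         (min_decycling_set H S \<and> min_decycling_set J T \<longrightarrow>
            min_decycling_set (glue H J S T f) (Inl ` S))"
proof (intro conjI impI)
  assume "decycling_set H S \<and> decycling_set J T"
  then show "decycling_set (glue H J S T f) (Inl ` S)" using part1[OF assms(6)] by blast
next
  assume a: "min_decycling_set H S \<and> min_decycling_set J T"
  then have "decycling_set J T" unfolding min_decycling_set_def by blast
  then show "min_decycling_set (glue H J S T f) (Inl ` S)"
    using part2[OF assms(1,2,6)] a by blast
qed

end
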